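(* Let $\gamma_a,\gamma_s>0$, $\lambda\ge0$, $q>0$, $\sigma_B>0$, $\varepsilon_a\in(0,2)$, and let $\beta_a,\beta_s:\mathbb R\to\mathbb R$ be globally Lipschitz continuous with $\beta_a\ge0$, $\beta_s>0$. For every $(T_a^{(0)},T_s^{(0)})\in[0,+\infty)^2$, the solution $(T_a(t),T_s(t))$ of \[ \begin{cases} \gamma_a T_a'=-\lambda(T_a-T_s)+\varepsilon_a\sigma_B|T_s|^3T_s-2\varepsilon_a\sigma_B|T_a|^3T_a+q\beta_a(T_a),\\ \gamma_s T_s'=-\lambda(T_s-T_a)-\sigma_B|T_s|^3T_s+\varepsilon_a\sigma_B|T_a|^3T_a+q\beta_s(T_s),\\ T_a(0)=T_a^{(0)},\quad T_s(0)=T_s^{(0)} \end{cases} \] converges as $t\to+\infty$ to some equilibrium point of the system. Moreover, there exists $T\ge0$ such that $t\mapsto T_a(t)$ and $t\mapsto T_s(t)$ are monotone on $[T,+\infty)$. *)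

theory Defs
  imports "HOL-Analysis.Analysis"
begin

text \<open>Right-hand sides of the two-layer energy balance system
  (already multiplied by gamma_a, gamma_s respectively).\<close>

definition Fa :: "real \<Rightarrow> real \<Rightarrow> real \<Rightarrow> real \<Rightarrow> (real \<Rightarrow> real) \<Rightarrow> real \<Rightarrow> real \<Rightarrow> real" where
  "Fa lam q sigB epsa betaa Ta Ts =
     - lam * (Ta - Ts) + epsa * sigB * \<bar>Ts\<bar>^3 * Ts - 2 * epsa * sigB * \<bar>Ta\<bar>^3 * Ta
     + q * betaa Ta"

definition Fs :: "real \<Rightarrow> real \<Rightarrow> real \<Rightarrow> real \<Rightarrow> (real \<Rightarrow> real) \<Rightarrow> real \<Rightarrow> real \<Rightarrow> real" where
  "Fs lam q sigB epsa betas Ta Ts =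
     - lam * (Ts - Ta) - sigB * \<bar>Ts\<bar>^3 * Ts + epsa * sigB * \<bar>Ta\<bar>^3 * Ta
     + q * betas Ts"

definition is_equilibrium ::
  "real \<Rightarrow> real \<Rightarrow> real \<Rightarrow> real \<Rightarrow> (real \<Rightarrow> real) \<Rightarrow> (real \<Rightarrow> real) \<Rightarrow> real \<times> real \<Rightarrow> bool" where
  "is_equilibrium lam q sigB epsa betaa betas p \<longleftrightarrow>
     Fa lam q sigB epsa betaa (fst p) (snd p) = 0 \<and> Fs lam q sigB epsa betas (fst p) (snd p) = 0"

end

theory Submission imports Defs begin

lemma negsq_bound:
  fixes s y :: real
  shows "\<bar>(min y 0)^2 - (min s 0)^2 - 2 * min s 0 * (y - s)\<bar> \<le> (y - s)^2"
proof -
  have sq: "0 \<le> (y - s)^2" by simp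
  consider "s \<le> 0" "y \<le> 0" | "s \<le> 0" "y > 0" | "s > 0" "y \<le> 0" | "s > 0" "y > 0" by linarith
  then show ?thesis
  proof cases
    case 1
    then have "(min y 0)^2 - (min s 0)^2 - 2 * min s 0 * (y - s) = (y - s)^2"
      by (simp add: power2_eq_square algebra_simps)
    then show ?thesis by simp
  next
    case 2
    have "0 \<le> -(s * y)" using 2 by (simp add: mult_nonpos_nonneg)
    have e: "(min y 0)^2 - (min s 0)^2 - 2 * min s 0 * (y - s) = s^2 - 2 * s * y"
      using 2 by (simp add: power2_eq_square algebra_simps)
    have "0 \<le> s^2 - 2 * s * y" using \<open>0 \<le> -(s * y)\<close> zero_le_square[of s] unfolding power2_eq_square mult.assoc by linarith
    moreover have "s^2 - 2 * s * y \<le> (y - s)^2" by (simp add: power2_eq_square algebra_simps)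
    ultimately show ?thesis unfolding e by simp
  next
    case 3
    have "0 \<le> -(s * y)" using 3 by (simp add: mult_nonneg_nonpos)
    moreover have "(y - s) * (y - s) = y * y - 2 * (s * y) + s * s" by (simp add: algebra_simps)
    ultimately have "y^2 \<le> (y - s)^2" using zero_le_square[of s]
      unfolding power2_eq_square by linarith
    then show ?thesis using 3 by simp
  next
    case 4 then show ?thesis by simp
  qed
qed

lemma DERIV_negsq: "((\<lambda>s::real. (min s 0)^2) has_real_derivative (2 * min x 0)) (at x)"
proof -
  have "((\<lambda>h. ((min (x+h) 0)^2 - (min x 0)^2)/h - 2 * min x 0) \<longlongrightarrow> 0) (at 0)"
  proof (rule Lim_null_comparison[where g="\<lambda>h. \<bar>h\<bar>"])
    show "\<forall>\<^sub>F h in at 0. norm (((min (x+h) 0)^2 - (min x 0)^2)/h - 2 * min x 0) \<le> \<bar>h\<bar>"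
    proof (rule eventually_at_filter[THEN iffD2], rule always_eventually, intro allI impI)
      fix h :: real assume "h \<noteq> 0"
      have "((min (x+h) 0)^2 - (min x 0)^2)/h - 2 * min x 0
          = ((min (x+h) 0)^2 - (min x 0)^2 - 2 * min x 0 * ((x+h) - x))/h"
        using \<open>h \<noteq> 0\<close> by (simp add: field_simps)
      also have "\<bar>\<dots>\<bar> \<le> h^2 / \<bar>h\<bar>"
        using negsq_bound[of "x+h" x] by (simp add: abs_divide divide_right_mono)
      also have "\<dots> = \<bar>h\<bar>"
      proof -
        show ?thesis using \<open>h \<noteq> 0\<close> by (cases "h > 0") (auto simp: field_simps power2_eq_square)
      qed
      finally show "norm (((min (x+h) 0)^2 - (min x 0)^2)/h - 2 * min x 0) \<le> \<bar>h\<bar>" by simp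
    qed
    show "((\<lambda>h::real. \<bar>h\<bar>) \<longlongrightarrow> 0) (at 0)"
      using tendsto_rabs[OF tendsto_ident_at[of 0 UNIV]] by simp
  qed
  then show ?thesis unfolding DERIV_def by (simp add: LIM_zero_iff)
qed

lemma key_ineq:
  fixes f :: "real \<Rightarrow> real \<Rightarrow> real"
  assumes mono: "b2 \<le> a2 \<Longrightarrow> f a1 b2 \<le> f a1 a2"
    and l1: "\<bar>f a1 b2 - f b1 b2\<bar> \<le> L * \<bar>a1 - b1\<bar>"
    and l2: "\<bar>f a1 a2 - f a1 b2\<bar> \<le> L * \<bar>a2 - b2\<bar>" and L: "L \<ge> 0"
  shows "min (a1 - b1) 0 * (f a1 a2 - f b1 b2) \<le> 2 * L * ((min (a1 - b1) 0)^2 + (min (a2 - b2) 0)^2)"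
proof (cases "a1 - b1 \<ge> 0")
  case True
  then show ?thesis using L by simp
next
  case False
  define d1 where "d1 = a1 - b1"
  define d2 where "d2 = a2 - b2"
  define A where "A = f a1 a2 - f a1 b2"
  define B where "B = f a1 b2 - f b1 b2"
  have d1n: "d1 < 0" using False d1_def by simp
  have m1: "min (a1 - b1) 0 = d1" using d1n d1_def by simp
  have "d1 * B \<le> \<bar>d1\<bar> * \<bar>B\<bar>" by (metis abs_ge_self abs_mult)
  also have "\<dots> \<le> \<bar>d1\<bar> * (L * \<bar>d1\<bar>)" using l1 unfolding B_def d1_def by (intro mult_left_mono) auto
  also have "\<dots> = L * \<bar>d1\<bar>^2" by (simp add: power2_eq_square)
  also have "\<dots> = L * d1^2" by simp
  finally have hB: "d1 * B \<le> L * d1^2" .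
  have hA: "d1 * A \<le> L * (d1^2 + (min d2 0)^2)"
  proof (cases "d2 \<ge> 0")
    case True
    then have "A \<ge> 0" using mono unfolding A_def d2_def by simp
    then have "d1 * A \<le> 0" using d1n by (simp add: mult_nonpos_nonneg)
    moreover have "0 \<le> L * (d1^2 + (min d2 0)^2)" using L by simp
    ultimately show ?thesis by linarith
  next
    case False
    have "d1 * A \<le> \<bar>d1\<bar> * \<bar>A\<bar>" by (metis abs_ge_self abs_mult)
    also have "\<dots> \<le> \<bar>d1\<bar> * (L * \<bar>d2\<bar>)" using l2 unfolding A_def d2_def by (intro mult_left_mono) auto
    also have "\<dots> = L * (\<bar>d1\<bar> * \<bar>d2\<bar>)" by simp
    also have "\<dots> \<le> L * (d1^2 + d2^2)"
    proof (rule mult_left_mono[OF _ L])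
      have "0 \<le> (\<bar>d1\<bar> - \<bar>d2\<bar>)^2" by simp
      then have "2 * \<bar>d1\<bar> * \<bar>d2\<bar> \<le> \<bar>d1\<bar>^2 + \<bar>d2\<bar>^2" unfolding power2_diff by linarith
      moreover have "0 \<le> \<bar>d1\<bar> * \<bar>d2\<bar>" by simp
      ultimately show "\<bar>d1\<bar> * \<bar>d2\<bar> \<le> d1^2 + d2^2" by (simp only: power2_abs)
    qed
    finally show ?thesis using False by simp
  qed
  have "min (a1 - b1) 0 * (f a1 a2 - f b1 b2) = d1 * A + d1 * B"
    unfolding m1 A_def B_def by (simp add: algebra_simps)
  also have "\<dots> \<le> L * (d1^2 + (min d2 0)^2) + L * d1^2" using hA hB by simp
  also have "\<dots> \<le> 2 * L * (d1^2 + (min d2 0)^2)" using L by (simp add: algebra_simps)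
  finally show ?thesis unfolding m1 d2_def .
qed

lemma comparison:
  fixes f1 f2 :: "real \<Rightarrow> real \<Rightarrow> real" and ua ub va vb :: "real \<Rightarrow> real"
  assumes L: "L \<ge> 0"
    and mono1: "\<And>x y y'. y \<le> y' \<Longrightarrow> f1 x y \<le> f1 x y'"
    and mono2: "\<And>x x' y. x \<le> x' \<Longrightarrow> f2 x y \<le> f2 x' y"
    and lip1x: "\<And>x x' y. \<bar>x\<bar> \<le> M \<Longrightarrow> \<bar>x'\<bar> \<le> M \<Longrightarrow> \<bar>y\<bar> \<le> M \<Longrightarrow> \<bar>f1 x y - f1 x' y\<bar> \<le> L * \<bar>x - x'\<bar>"
    and lip1y: "\<And>x y y'. \<bar>x\<bar> \<le> M \<Longrightarrow> \<bar>y\<bar> \<le> M \<Longrightarrow> \<bar>y'\<bar> \<le> M \<Longrightarrow> \<bar>f1 x y - f1 x y'\<bar> \<le> L * \<bar>y - y'\<bar>"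
    and lip2x: "\<And>x x' y. \<bar>x\<bar> \<le> M \<Longrightarrow> \<bar>x'\<bar> \<le> M \<Longrightarrow> \<bar>y\<bar> \<le> M \<Longrightarrow> \<bar>f2 x y - f2 x' y\<bar> \<le> L * \<bar>x - x'\<bar>"
    and lip2y: "\<And>x y y'. \<bar>x\<bar> \<le> M \<Longrightarrow> \<bar>y\<bar> \<le> M \<Longrightarrow> \<bar>y'\<bar> \<le> M \<Longrightarrow> \<bar>f2 x y - f2 x y'\<bar> \<le> L * \<bar>y - y'\<bar>"
    and du1: "\<And>t. t \<ge> t0 \<Longrightarrow> (ua has_real_derivative f1 (ua t) (ub t)) (at t)"
    and du2: "\<And>t. t \<ge> t0 \<Longrightarrow> (ub has_real_derivative f2 (ua t) (ub t)) (at t)"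
    and dv1: "\<And>t. t \<ge> t0 \<Longrightarrow> (va has_real_derivative f1 (va t) (vb t)) (at t)"
    and dv2: "\<And>t. t \<ge> t0 \<Longrightarrow> (vb has_real_derivative f2 (va t) (vb t)) (at t)"
    and bnd: "\<And>t. t \<ge> t0 \<Longrightarrow> \<bar>ua t\<bar> \<le> M \<and> \<bar>ub t\<bar> \<le> M \<and> \<bar>va t\<bar> \<le> M \<and> \<bar>vb t\<bar> \<le> M"
    and tt: "t0 \<le> t"
  shows "(min (ua t - va t) 0)^2 + (min (ub t - vb t) 0)^2
     \<le> ((min (ua t0 - va t0) 0)^2 + (min (ub t0 - vb t0) 0)^2) * exp (8 * L * (t - t0))"
proof -
  define \<phi> where "\<phi> s = (min (ua s - va s) 0)^2 + (min (ub s - vb s) 0)^2" for s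
  define K where "K = 8 * L"
  define D where "D s = 2 * min (ua s - va s) 0 * (f1 (ua s) (ub s) - f1 (va s) (vb s))
     + 2 * min (ub s - vb s) 0 * (f2 (ua s) (ub s) - f2 (va s) (vb s))" for s
  have dphi: "(\<phi> has_real_derivative D s) (at s)" if "s \<ge> t0" for s
  proof -
    have a: "((\<lambda>s. ua s - va s) has_real_derivative f1 (ua s) (ub s) - f1 (va s) (vb s)) (at s)"
      using du1[OF that] dv1[OF that] by (rule DERIV_diff)
    have b: "((\<lambda>s. ub s - vb s) has_real_derivative f2 (ua s) (ub s) - f2 (va s) (vb s)) (at s)"
      using du2[OF that] dv2[OF that] by (rule DERIV_diff)
    have "((\<lambda>s. (min (ua s - va s) 0)^2 + (min (ub s - vb s) 0)^2) has_real_derivative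
       2 * min (ua s - va s) 0 * (f1 (ua s) (ub s) - f1 (va s) (vb s))
     + 2 * min (ub s - vb s) 0 * (f2 (ua s) (ub s) - f2 (va s) (vb s))) (at s)"
      by (rule DERIV_add[OF DERIV_chain2[OF DERIV_negsq a] DERIV_chain2[OF DERIV_negsq b]])
    then show ?thesis unfolding \<phi>_def D_def .
  qed
  have Dle: "D s \<le> K * \<phi> s" if "s \<ge> t0" for s
  proof -
    from bnd[OF that] have B: "\<bar>ua s\<bar> \<le> M" "\<bar>ub s\<bar> \<le> M" "\<bar>va s\<bar> \<le> M" "\<bar>vb s\<bar> \<le> M" by auto
    have k1: "min (ua s - va s) 0 * (f1 (ua s) (ub s) - f1 (va s) (vb s)) \<le> 2 * L * \<phi> s"
      unfolding \<phi>_def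
      by (rule key_ineq[OF mono1 lip1x lip1y L]) (use B in auto)
    have k2: "min (ub s - vb s) 0 * ((\<lambda>y x. f2 x y) (ub s) (ua s) - (\<lambda>y x. f2 x y) (vb s) (va s))
        \<le> 2 * L * ((min (ub s - vb s) 0)^2 + (min (ua s - va s) 0)^2)"
      by (rule key_ineq[OF _ _ _ L]) (use B mono2 lip2x lip2y in auto)
    have k2': "min (ub s - vb s) 0 * (f2 (ua s) (ub s) - f2 (va s) (vb s)) \<le> 2 * L * \<phi> s"
      using k2 unfolding \<phi>_def by (simp add: add.commute)
    show ?thesis unfolding D_def K_def using k1 k2' by linarith
  qed
  define \<psi> where "\<psi> s = \<phi> s * exp (- K * (s - t0))" for s
  have "\<psi> t \<le> \<psi> t0"
  proof (rule DERIV_nonpos_imp_nonincreasing[OF tt])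
    fix s assume s: "t0 \<le> s" "s \<le> t"
    have e: "((\<lambda>s. exp (- K * (s - t0))) has_real_derivative exp (- K * (s - t0)) * (- K)) (at s)"
      by (auto intro!: derivative_eq_intros)
    have "(\<psi> has_real_derivative (D s - K * \<phi> s) * exp (- K * (s - t0))) (at s)"
      unfolding \<psi>_def[abs_def]
      by (rule DERIV_cong[OF DERIV_mult[OF dphi[OF s(1)] e]]) (simp add: algebra_simps)
    moreover have "(D s - K * \<phi> s) * exp (- K * (s - t0)) \<le> 0"
      using Dle[of s] s by (simp add: mult_nonpos_nonneg)
    ultimately show "\<exists>y. (\<psi> has_real_derivative y) (at s) \<and> y \<le> 0" by auto
  qed
  then have "\<phi> t * exp (- K * (t - t0)) \<le> \<phi> t0" unfolding \<psi>_def by simp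
  then have "\<phi> t * exp (- K * (t - t0)) * exp (K * (t - t0)) \<le> \<phi> t0 * exp (K * (t - t0))"
    by (simp add: mult_right_mono)
  moreover have "exp (- K * (t - t0)) * exp (K * (t - t0)) = 1" by (simp add: exp_add[symmetric])
  ultimately have "\<phi> t \<le> \<phi> t0 * exp (K * (t - t0))" by (metis mult.assoc mult.right_neutral)
  then show ?thesis unfolding \<phi>_def K_def .
qed

lemma lim_aux:
  fixes a1 a2 b1 b2 :: "real \<Rightarrow> real"
  assumes le: "\<And>h. h > 0 \<Longrightarrow> (min (a1 h) 0)^2 + (min (a2 h) 0)^2 \<le> ((min (b1 h) 0)^2 + (min (b2 h) 0)^2) * E"
    and "(a1 \<longlongrightarrow> A1) (at_right 0)" "(a2 \<longlongrightarrow> A2) (at_right 0)"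
    and "(b1 \<longlongrightarrow> B1) (at_right 0)" "(b2 \<longlongrightarrow> B2) (at_right 0)"
  shows "(min A1 0)^2 + (min A2 0)^2 \<le> ((min B1 0)^2 + (min B2 0)^2) * E"
proof (rule tendsto_le[of "at_right (0::real)"])
  show "at_right (0::real) \<noteq> bot" by simp
  show "((\<lambda>h. (min (a1 h) 0)^2 + (min (a2 h) 0)^2) \<longlongrightarrow> (min A1 0)^2 + (min A2 0)^2) (at_right 0)"
    by (intro tendsto_intros assms)
  show "((\<lambda>h. ((min (b1 h) 0)^2 + (min (b2 h) 0)^2) * E) \<longlongrightarrow> ((min B1 0)^2 + (min B2 0)^2) * E) (at_right 0)"
    by (intro tendsto_intros assms)
  show "\<forall>\<^sub>F h in at_right 0. (min (a1 h) 0)^2 + (min (a2 h) 0)^2 \<le> ((min (b1 h) 0)^2 + (min (b2 h) 0)^2) * E"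
    using le eventually_at_right_less[of 0] by (auto elim!: eventually_mono)
qed

lemma min_scale: "h > 0 \<Longrightarrow> (min (a::real) 0)^2 = h^2 * (min (a / h) 0)^2"
proof -
  assume h: "h > 0"
  have "min a 0 = h * min (a / h) 0" using h by (cases "a \<le> 0") (auto simp: min_def divide_le_0_iff field_simps)
  then show ?thesis by (simp add: power_mult_distrib)
qed

lemma diffq_lim:
  assumes "(x has_real_derivative d) (at t)"
  shows "((\<lambda>h. (x (t + h) - x t) / h) \<longlongrightarrow> d) (at_right 0)"
  using DERIV_D[OF assms] by (rule tendsto_mono[OF at_le, rotated]) simp

lemma quadrant:
  fixes f1 f2 :: "real \<Rightarrow> real \<Rightarrow> real" and x y :: "real \<Rightarrow> real"
  assumes L: "L \<ge> 0"
    and mono1: "\<And>x y y'. y \<le> y' \<Longrightarrow> f1 x y \<le> f1 x y'"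
    and mono2: "\<And>x x' y. x \<le> x' \<Longrightarrow> f2 x y \<le> f2 x' y"
    and lip1x: "\<And>x x' y. \<bar>x\<bar> \<le> M \<Longrightarrow> \<bar>x'\<bar> \<le> M \<Longrightarrow> \<bar>y\<bar> \<le> M \<Longrightarrow> \<bar>f1 x y - f1 x' y\<bar> \<le> L * \<bar>x - x'\<bar>"
    and lip1y: "\<And>x y y'. \<bar>x\<bar> \<le> M \<Longrightarrow> \<bar>y\<bar> \<le> M \<Longrightarrow> \<bar>y'\<bar> \<le> M \<Longrightarrow> \<bar>f1 x y - f1 x y'\<bar> \<le> L * \<bar>y - y'\<bar>"
    and lip2x: "\<And>x x' y. \<bar>x\<bar> \<le> M \<Longrightarrow> \<bar>x'\<bar> \<le> M \<Longrightarrow> \<bar>y\<bar> \<le> M \<Longrightarrow> \<bar>f2 x y - f2 x' y\<bar> \<le> L * \<bar>x - x'\<bar>"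
    and lip2y: "\<And>x y y'. \<bar>x\<bar> \<le> M \<Longrightarrow> \<bar>y\<bar> \<le> M \<Longrightarrow> \<bar>y'\<bar> \<le> M \<Longrightarrow> \<bar>f2 x y - f2 x y'\<bar> \<le> L * \<bar>y - y'\<bar>"
    and dx: "\<And>t. t \<ge> t0 \<Longrightarrow> (x has_real_derivative f1 (x t) (y t)) (at t)"
    and dy: "\<And>t. t \<ge> t0 \<Longrightarrow> (y has_real_derivative f2 (x t) (y t)) (at t)"
    and bnd: "\<And>t. t \<ge> t0 \<Longrightarrow> \<bar>x t\<bar> \<le> M \<and> \<bar>y t\<bar> \<le> M"
    and tt: "t0 \<le> t"
  shows "(min (f1 (x t) (y t)) 0)^2 + (min (f2 (x t) (y t)) 0)^2
     \<le> ((min (f1 (x t0) (y t0)) 0)^2 + (min (f2 (x t0) (y t0)) 0)^2) * exp (8 * L * (t - t0))"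
    and "(min (- f1 (x t) (y t)) 0)^2 + (min (- f2 (x t) (y t)) 0)^2
     \<le> ((min (- f1 (x t0) (y t0)) 0)^2 + (min (- f2 (x t0) (y t0)) 0)^2) * exp (8 * L * (t - t0))"
proof -
  define E where "E = exp (8 * L * (t - t0))"
  have dxs: "((\<lambda>s. x (s + h)) has_real_derivative f1 (x (s + h)) (y (s + h))) (at s)"
    if "h > 0" "s \<ge> t0" for h s
    using dx[of "s + h"] that DERIV_shift by auto
  have dys: "((\<lambda>s. y (s + h)) has_real_derivative f2 (x (s + h)) (y (s + h))) (at s)"
    if "h > 0" "s \<ge> t0" for h s
    using dy[of "s + h"] that DERIV_shift by auto
  have bnds: "\<bar>x (s + h)\<bar> \<le> M \<and> \<bar>y (s + h)\<bar> \<le> M \<and> \<bar>x s\<bar> \<le> M \<and> \<bar>y s\<bar> \<le> M"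
    if "h > 0" "s \<ge> t0" for h s using bnd[of s] bnd[of "s+h"] that by auto
  have cancel: "A \<le> B * E" if "h > 0" "h^2 * A \<le> h^2 * B * E" for h A B :: real
    using that by (simp add: mult.assoc)
  have P: "(min ((x (t + h) - x t) / h) 0)^2 + (min ((y (t + h) - y t) / h) 0)^2
     \<le> ((min ((x (t0 + h) - x t0) / h) 0)^2 + (min ((y (t0 + h) - y t0) / h) 0)^2) * E"
    if h: "h > 0" for h
  proof (rule cancel[OF h])
    have "(min (x (t + h) - x t) 0)^2 + (min (y (t + h) - y t) 0)^2
     \<le> ((min (x (t0 + h) - x t0) 0)^2 + (min (y (t0 + h) - y t0) 0)^2) * E"
      unfolding E_def
      by (rule comparison[OF L mono1 mono2 lip1x lip1y lip2x lip2y dxs[OF h] dys[OF h] dx dy _ tt]) (use bnds[OF h] in auto)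
    then show "h^2 * ((min ((x (t + h) - x t) / h) 0)^2 + (min ((y (t + h) - y t) / h) 0)^2)
     \<le> h^2 * ((min ((x (t0 + h) - x t0) / h) 0)^2 + (min ((y (t0 + h) - y t0) / h) 0)^2) * E"
      unfolding min_scale[OF h, of "x (t + h) - x t"] min_scale[OF h, of "y (t + h) - y t"]
        min_scale[OF h, of "x (t0 + h) - x t0"] min_scale[OF h, of "y (t0 + h) - y t0"]
      by (simp add: distrib_left)
  qed
  have N: "(min ((x t - x (t + h)) / h) 0)^2 + (min ((y t - y (t + h)) / h) 0)^2
     \<le> ((min ((x t0 - x (t0 + h)) / h) 0)^2 + (min ((y t0 - y (t0 + h)) / h) 0)^2) * E"
    if h: "h > 0" for h
  proof (rule cancel[OF h])
    have "(min (x t - x (t + h)) 0)^2 + (min (y t - y (t + h)) 0)^2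
     \<le> ((min (x t0 - x (t0 + h)) 0)^2 + (min (y t0 - y (t0 + h)) 0)^2) * E"
      unfolding E_def
      by (rule comparison[OF L mono1 mono2 lip1x lip1y lip2x lip2y dx dy dxs[OF h] dys[OF h] _ tt]) (use bnds[OF h] in auto)
    then show "h^2 * ((min ((x t - x (t + h)) / h) 0)^2 + (min ((y t - y (t + h)) / h) 0)^2)
     \<le> h^2 * ((min ((x t0 - x (t0 + h)) / h) 0)^2 + (min ((y t0 - y (t0 + h)) / h) 0)^2) * E"
      unfolding min_scale[OF h, of "x t - x (t + h)"] min_scale[OF h, of "y t - y (t + h)"]
        min_scale[OF h, of "x t0 - x (t0 + h)"] min_scale[OF h, of "y t0 - y (t0 + h)"]
      by (simp add: distrib_left)
  qed
  have t0t: "t0 \<le> t0" by simp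
  show "(min (f1 (x t) (y t)) 0)^2 + (min (f2 (x t) (y t)) 0)^2
     \<le> ((min (f1 (x t0) (y t0)) 0)^2 + (min (f2 (x t0) (y t0)) 0)^2) * exp (8 * L * (t - t0))"
    unfolding E_def[symmetric]
    by (rule lim_aux[OF P diffq_lim[OF dx[OF tt]] diffq_lim[OF dy[OF tt]] diffq_lim[OF dx[OF t0t]] diffq_lim[OF dy[OF t0t]]])
  have neg: "((\<lambda>h. (z t' - z (t' + h)) / h) \<longlongrightarrow> - d) (at_right 0)"
    if "((\<lambda>h. (z (t' + h) - z t') / h) \<longlongrightarrow> d) (at_right 0)" for z :: "real \<Rightarrow> real" and t' d
    using tendsto_minus[OF that] by (simp add: minus_divide_left)
  show "(min (- f1 (x t) (y t)) 0)^2 + (min (- f2 (x t) (y t)) 0)^2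
     \<le> ((min (- f1 (x t0) (y t0)) 0)^2 + (min (- f2 (x t0) (y t0)) 0)^2) * exp (8 * L * (t - t0))"
    unfolding E_def[symmetric]
    by (rule lim_aux[OF N neg[OF diffq_lim[OF dx[OF tt]]] neg[OF diffq_lim[OF dy[OF tt]]]
          neg[OF diffq_lim[OF dx[OF t0t]]] neg[OF diffq_lim[OF dy[OF t0t]]]])
qed


lemma stay_in:
  fixes g g' :: "'i \<Rightarrow> real \<Rightarrow> real"
  assumes fin: "finite I"
    and dg: "\<And>i t. i \<in> I \<Longrightarrow> t \<ge> t0 \<Longrightarrow> (g i has_real_derivative g' i t) (at t)"
    and init: "\<And>i. i \<in> I \<Longrightarrow> g i t0 \<le> 0"
    and bd: "\<And>i t. i \<in> I \<Longrightarrow> t \<ge> t0 \<Longrightarrow> (\<forall>j\<in>I. g j t \<le> 0) \<Longrightarrow> g i t = 0 \<Longrightarrow> g' i t < 0"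
    and t: "t \<ge> t0" and i: "i \<in> I"
  shows "g i t \<le> 0"
proof (rule ccontr)
  assume "\<not> g i t \<le> 0"
  define E where "E = {s. s \<ge> t0 \<and> (\<exists>j\<in>I. g j s > 0)}"
  have tE: "t \<in> E" unfolding E_def using t i \<open>\<not> g i t \<le> 0\<close> by (auto intro!: bexI[of _ i])
  have bdd: "bdd_below E" unfolding E_def by (rule bdd_belowI[of _ t0]) auto
  define \<tau> where "\<tau> = Inf E"
  have tau0: "\<tau> \<ge> t0" unfolding \<tau>_def using tE by (intro cInf_greatest) (auto simp: E_def)
  have below: "\<forall>j\<in>I. g j s \<le> 0" if "t0 \<le> s" "s < \<tau>" for s
  proof -
    have "s \<notin> E" using cInf_lower[OF _ bdd, of s] that unfolding \<tau>_def by force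
    then show ?thesis using that unfolding E_def by force
  qed
  have cont: "isCont (g j) s" if "j \<in> I" "s \<ge> t0" for j s
    using dg[OF that] by (rule DERIV_isCont)
  have atau: "\<forall>j\<in>I. g j \<tau> \<le> 0"
  proof
    fix j assume j: "j \<in> I"
    show "g j \<tau> \<le> 0"
    proof (cases "\<tau> = t0")
      case True then show ?thesis using init j by simp
    next
      case False
      then have lt: "t0 < \<tau>" using tau0 by simp
      show ?thesis
      proof (rule ccontr)
        assume "\<not> g j \<tau> \<le> 0"
        have "(g j \<longlongrightarrow> g j \<tau>) (at_left \<tau>)"
          using cont[OF j tau0] unfolding isCont_def by (rule tendsto_mono[OF at_le, rotated]) simp
        then have ev1: "\<forall>\<^sub>F s in at_left \<tau>. 0 < g j s"
          using \<open>\<not> g j \<tau> \<le> 0\<close> by (intro order_tendstoD(1)) auto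
        have ev2: "\<forall>\<^sub>F s in at_left \<tau>. s \<in> {t0<..<\<tau>}" using eventually_at_left_real[OF lt] .
        obtain s where "0 < g j s" "s \<in> {t0<..<\<tau>}"
          using eventually_happens[OF eventually_conj[OF ev1 ev2]] by auto
        then show False using below[of s] j by force
      qed
    qed
  qed
  have evj: "\<forall>\<^sub>F s in at_right \<tau>. g j s \<le> 0" if j: "j \<in> I" for j
  proof (cases "g j \<tau> < 0")
    case True
    have "(g j \<longlongrightarrow> g j \<tau>) (at_right \<tau>)"
      using cont[OF j tau0] unfolding isCont_def by (rule tendsto_mono[OF at_le, rotated]) simp
    then have "\<forall>\<^sub>F s in at_right \<tau>. g j s < 0"
      using True by (intro order_tendstoD(2)) auto
    then show ?thesis by (auto elim: eventually_mono)
  next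
    case False
    then have z: "g j \<tau> = 0" using atau j by force
    have "g' j \<tau> < 0" using bd[OF j tau0 atau z] .
    from has_real_derivative_neg_dec_right[OF dg[OF j tau0] this]
    obtain d where d: "d > 0" "\<And>h. h > 0 \<Longrightarrow> h < d \<Longrightarrow> g j (\<tau> + h) < g j \<tau>" by auto
    show ?thesis unfolding eventually_at_right_field
    proof (intro exI[of _ "\<tau> + d"] conjI allI impI)
      show "\<tau> < \<tau> + d" using d by simp
      fix y assume "\<tau> < y" "y < \<tau> + d"
      then show "g j y \<le> 0" using d(2)[of "y - \<tau>"] z by simp
    qed
  qed
  have "\<forall>\<^sub>F s in at_right \<tau>. \<forall>j\<in>I. g j s \<le> 0"
    using fin evj by (simp add: eventually_ball_finite)
  then obtain b where b: "b > \<tau>" "\<And>y. \<tau> < y \<Longrightarrow> y < b \<Longrightarrow> \<forall>j\<in>I. g j y \<le> 0"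
    unfolding eventually_at_right_field by auto
  have "b \<le> \<tau>" unfolding \<tau>_def
  proof (rule cInf_greatest)
    show "E \<noteq> {}" using tE by auto
    fix e assume e: "e \<in> E"
    then have e0: "e \<ge> t0" and ex: "\<exists>j\<in>I. g j e > 0" unfolding E_def by auto
    show "b \<le> e"
    proof (rule ccontr)
      assume "\<not> b \<le> e"
      then have "e < b" by simp
      moreover have "\<not> e < \<tau>" using below[OF e0] ex by force
      moreover have "e \<noteq> \<tau>" using atau ex by force
      ultimately show False using b(2)[of e] ex by force
    qed
  qed
  then show False using b(1) by simp
qed


lemma quart_mono: "(x::real) \<le> y \<Longrightarrow> \<bar>x\<bar>^3 * x \<le> \<bar>y\<bar>^3 * y"
proof -
  assume xy: "x \<le> y"
  consider "0 \<le> x" | "x < 0" "0 \<le> y" | "y < 0" using xy by linarith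
  then show ?thesis
  proof cases
    case 1
    then have "x^4 \<le> y^4" using xy by (intro power_mono) auto
    then show ?thesis using 1 xy by (simp add: power_Suc[symmetric] power_commutes)
  next
    case 2
    have "\<bar>x\<bar>^3 * x \<le> 0" using 2 by (intro mult_nonneg_nonpos) auto
    moreover have "0 \<le> \<bar>y\<bar>^3 * y" using 2 by simp
    ultimately show ?thesis by linarith
  next
    case 3
    have "\<bar>y\<bar>^4 \<le> \<bar>x\<bar>^4" using 3 xy by (intro power_mono) auto
    moreover have "\<bar>x\<bar>^3 * x = - (\<bar>x\<bar>^4)" using 3 xy by (simp add: power_Suc[symmetric] power_commutes)
    moreover have "\<bar>y\<bar>^3 * y = - (\<bar>y\<bar>^4)" using 3 by (simp add: power_Suc[symmetric] power_commutes)
    ultimately show ?thesis by linarith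
  qed
qed

lemma quart_diff_nonneg:
  fixes a b M :: real
  assumes "0 \<le> b" "b \<le> a" "a \<le> M"
  shows "a^4 - b^4 \<le> 4 * M^3 * (a - b)"
proof -
  have e: "a^4 - b^4 = (a - b) * (a^3 + a^2 * b + a * b^2 + b^3)" by (simp add: algebra_simps power2_eq_square power3_eq_cube power4_eq_xxxx)
  have M0: "0 \<le> M" using assms by linarith
  have "a^3 \<le> M^3" using assms by (intro power_mono) auto
  moreover have "a^2 * b \<le> M^2 * M" using assms by (intro mult_mono power_mono) auto
  moreover have "a * b^2 \<le> M * M^2" using assms M0 by (intro mult_mono power_mono) auto
  moreover have "b^3 \<le> M^3" using assms by (intro power_mono) auto
  ultimately have "a^3 + a^2 * b + a * b^2 + b^3 \<le> 4 * M^3" by (simp add: power2_eq_square power3_eq_cube)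
  then have "(a - b) * (a^3 + a^2 * b + a * b^2 + b^3) \<le> (a - b) * (4 * M^3)"
    using assms by (intro mult_left_mono) auto
  then show ?thesis unfolding e by (simp add: mult.commute)
qed

lemma quart_abs_lip:
  fixes a b M :: real
  assumes "0 \<le> a" "a \<le> M" "0 \<le> b" "b \<le> M"
  shows "\<bar>a^4 - b^4\<bar> \<le> 4 * M^3 * \<bar>a - b\<bar>"
proof (cases "b \<le> a")
  case True
  then have "b^4 \<le> a^4" using assms by (intro power_mono) auto
  then show ?thesis using quart_diff_nonneg[of b a M] True assms by simp
next
  case False
  then have "a^4 \<le> b^4" using assms by (intro power_mono) auto
  then show ?thesis using quart_diff_nonneg[of a b M] False assms by simp
qed

lemma quart_lip:
  fixes x y M :: real
  assumes "\<bar>x\<bar> \<le> M" "\<bar>y\<bar> \<le> M"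
  shows "\<bar>\<bar>x\<bar>^3 * x - \<bar>y\<bar>^3 * y\<bar> \<le> 4 * M^3 * \<bar>x - y\<bar>"
proof -
  have ex: "\<bar>x\<bar>^3 * x = sgn x * \<bar>x\<bar>^4" by (cases x "0::real" rule: linorder_cases) (auto simp: power_Suc[symmetric] power_commutes)
  have ey: "\<bar>y\<bar>^3 * y = sgn y * \<bar>y\<bar>^4" by (cases y "0::real" rule: linorder_cases) (auto simp: power_Suc[symmetric] power_commutes)
  have M0: "0 \<le> M" using assms by linarith
  have L: "\<bar>\<bar>x\<bar>^4 - \<bar>y\<bar>^4\<bar> \<le> 4 * M^3 * \<bar>\<bar>x\<bar> - \<bar>y\<bar>\<bar>" using quart_abs_lip[of "\<bar>x\<bar>" M "\<bar>y\<bar>"] assms by simp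
  consider "0 \<le> x" "0 \<le> y" | "x < 0" "y < 0" | "0 \<le> x" "y < 0" | "x < 0" "0 \<le> y" by linarith
  then show ?thesis
  proof cases
    case 1
    have "x^3 * x = x^4" "y^3 * y = y^4" by (simp_all add: power4_eq_xxxx power3_eq_cube)
    then show ?thesis using L 1 by simp
  next
    case 2
    have "\<bar>x\<bar>^3 * x - \<bar>y\<bar>^3 * y = - (\<bar>x\<bar>^4 - \<bar>y\<bar>^4)" using 2 by (simp add: power4_eq_xxxx power3_eq_cube)
    moreover have "\<bar>\<bar>x\<bar> - \<bar>y\<bar>\<bar> = \<bar>x - y\<bar>" using 2 by simp
    ultimately show ?thesis using L by (simp only: abs_minus_cancel)
  next
    case 3
    have "\<bar>x\<bar>^4 \<le> M^3 * \<bar>x\<bar>"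
    proof -
      have "\<bar>x\<bar>^3 \<le> M^3" using assms by (intro power_mono) auto
      then have "\<bar>x\<bar>^3 * \<bar>x\<bar> \<le> M^3 * \<bar>x\<bar>" by (intro mult_right_mono) auto
      then show ?thesis by (simp add: power_Suc[symmetric] power_commutes)
    qed
    moreover have "\<bar>y\<bar>^4 \<le> M^3 * \<bar>y\<bar>"
    proof -
      have "\<bar>y\<bar>^3 \<le> M^3" using assms by (intro power_mono) auto
      then have "\<bar>y\<bar>^3 * \<bar>y\<bar> \<le> M^3 * \<bar>y\<bar>" by (intro mult_right_mono) auto
      then show ?thesis by (simp add: power_Suc[symmetric] power_commutes)
    qed
    ultimately have le: "\<bar>x\<bar>^4 + \<bar>y\<bar>^4 \<le> M^3 * (\<bar>x\<bar> + \<bar>y\<bar>)" by (simp add: algebra_simps)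
    have D: "\<bar>x\<bar>^3 * x - \<bar>y\<bar>^3 * y = \<bar>x\<bar>^4 + \<bar>y\<bar>^4" using 3 by (simp add: power4_eq_xxxx power3_eq_cube)
    have "\<bar>\<bar>x\<bar>^3 * x - \<bar>y\<bar>^3 * y\<bar> = \<bar>x\<bar>^4 + \<bar>y\<bar>^4" unfolding D by simp
    also have "\<dots> \<le> M^3 * (\<bar>x\<bar> + \<bar>y\<bar>)" by (rule le)
    also have "\<dots> \<le> 4 * M^3 * (\<bar>x\<bar> + \<bar>y\<bar>)" using M0 by (intro mult_right_mono) auto
    also have "\<bar>x\<bar> + \<bar>y\<bar> = \<bar>x - y\<bar>" using 3 by simp
    finally show ?thesis .
  next
    case 4
    have "\<bar>x\<bar>^4 \<le> M^3 * \<bar>x\<bar>"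
    proof -
      have "\<bar>x\<bar>^3 \<le> M^3" using assms by (intro power_mono) auto
      then have "\<bar>x\<bar>^3 * \<bar>x\<bar> \<le> M^3 * \<bar>x\<bar>" by (intro mult_right_mono) auto
      then show ?thesis by (simp add: power_Suc[symmetric] power_commutes)
    qed
    moreover have "\<bar>y\<bar>^4 \<le> M^3 * \<bar>y\<bar>"
    proof -
      have "\<bar>y\<bar>^3 \<le> M^3" using assms by (intro power_mono) auto
      then have "\<bar>y\<bar>^3 * \<bar>y\<bar> \<le> M^3 * \<bar>y\<bar>" by (intro mult_right_mono) auto
      then show ?thesis by (simp add: power_Suc[symmetric] power_commutes)
    qed
    ultimately have le: "\<bar>x\<bar>^4 + \<bar>y\<bar>^4 \<le> M^3 * (\<bar>x\<bar> + \<bar>y\<bar>)" by (simp add: algebra_simps)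
    have D: "\<bar>x\<bar>^3 * x - \<bar>y\<bar>^3 * y = - (\<bar>x\<bar>^4 + \<bar>y\<bar>^4)" using 4 by (simp add: power4_eq_xxxx power3_eq_cube)
    have "\<bar>\<bar>x\<bar>^3 * x - \<bar>y\<bar>^3 * y\<bar> = \<bar>x\<bar>^4 + \<bar>y\<bar>^4" unfolding D abs_minus_cancel by simp
    also have "\<dots> \<le> M^3 * (\<bar>x\<bar> + \<bar>y\<bar>)" by (rule le)
    also have "\<dots> \<le> 4 * M^3 * (\<bar>x\<bar> + \<bar>y\<bar>)" using M0 by (intro mult_right_mono) auto
    also have "\<bar>x\<bar> + \<bar>y\<bar> = \<bar>x - y\<bar>" using 4 by simp
    finally show ?thesis .
  qed
qed


lemma mono_bdd_conv_inc:
  fixes f :: "real \<Rightarrow> real"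
  assumes m: "mono_on {T..} f" and b: "\<And>t. t \<ge> T \<Longrightarrow> \<bar>f t\<bar> \<le> C"
  shows "\<exists>l. (f \<longlongrightarrow> l) at_top"
proof -
  define l where "l = Sup (f ` {T..})"
  have ne: "f ` {T..} \<noteq> {}" by auto
  have bdd: "bdd_above (f ` {T..})" using b by (intro bdd_aboveI[of _ C]) (auto simp: abs_le_iff)
  have "(f \<longlongrightarrow> l) at_top"
  proof (rule increasing_tendsto)
    show "\<forall>\<^sub>F n in at_top. f n \<le> l"
      unfolding eventually_at_top_linorder l_def using bdd by (intro exI[of _ T] allI impI cSup_upper) auto
    fix x assume "x < l"
    then obtain s where s: "s \<ge> T" "x < f s" unfolding l_def less_cSup_iff[OF ne bdd] by auto
    show "\<forall>\<^sub>F n in at_top. x < f n"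
      unfolding eventually_at_top_linorder
    proof (intro exI[of _ s] allI impI)
      fix n assume "n \<ge> s"
      then have "f s \<le> f n" using m s by (auto simp: mono_on_def)
      then show "x < f n" using s by simp
    qed
  qed
  then show ?thesis by blast
qed

lemma mono_bdd_conv:
  fixes f :: "real \<Rightarrow> real"
  assumes m: "mono_on {T..} f \<or> antimono_on {T..} f" and b: "\<And>t. t \<ge> T \<Longrightarrow> \<bar>f t\<bar> \<le> C"
  shows "\<exists>l. (f \<longlongrightarrow> l) at_top"
  using m
proof
  assume "mono_on {T..} f" then show ?thesis using mono_bdd_conv_inc b by blast
next
  assume "antimono_on {T..} f"
  then have "mono_on {T..} (\<lambda>t. - f t)" by (auto simp: mono_on_def monotone_on_def)
  then obtain l where "((\<lambda>t. - f t) \<longlongrightarrow> l) at_top" using mono_bdd_conv_inc[of T "\<lambda>t. - f t" C] b by auto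
  then have "((\<lambda>t. - (- f t)) \<longlongrightarrow> - l) at_top" by (rule tendsto_minus)
  then show ?thesis by auto
qed

lemma deriv_limit_zero_pos:
  fixes x d :: "real \<Rightarrow> real"
  assumes dx: "\<And>t. t \<ge> T \<Longrightarrow> (x has_real_derivative d t) (at t)"
    and lim: "(d \<longlongrightarrow> D) at_top" and b: "\<And>t. t \<ge> T \<Longrightarrow> \<bar>x t\<bar> \<le> C"
  shows "\<not> D > 0"
proof
  assume D: "D > 0"
  have "\<forall>\<^sub>F t in at_top. D / 2 < d t" using lim D by (intro order_tendstoD(1)) auto
  then obtain T1 where T1: "\<And>t. t \<ge> T1 \<Longrightarrow> D / 2 < d t" unfolding eventually_at_top_linorder by auto
  define T2 where "T2 = max T T1"
  define t where "t = T2 + (2 * C + 1) / (D / 2)"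
  have C0: "C \<ge> 0" using b[of T] by linarith
  have tT2: "T2 \<le> t" unfolding t_def using C0 D by simp
  have "x T2 - D / 2 * T2 \<le> x t - D / 2 * t"
  proof (rule DERIV_nonneg_imp_nondecreasing[OF tT2])
    fix s assume s: "T2 \<le> s" "s \<le> t"
    have "((\<lambda>s. x s - D / 2 * s) has_real_derivative d s - D / 2) (at s)"
      using dx[of s] s unfolding T2_def by (auto intro!: derivative_eq_intros)
    moreover have "d s - D / 2 \<ge> 0" using T1[of s] s unfolding T2_def by simp
    ultimately show "\<exists>y. ((\<lambda>s. x s - D / 2 * s) has_real_derivative y) (at s) \<and> y \<ge> 0" by blast
  qed
  then have "x t \<ge> x T2 + D / 2 * (t - T2)" by (simp add: right_diff_distrib)
  moreover have "D / 2 * (t - T2) = 2 * C + 1" unfolding t_def using D by simp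
  moreover have "x T2 \<ge> - C" using b[of T2] unfolding T2_def by auto
  moreover have "x t \<le> C" using b[of t] tT2 unfolding T2_def by auto
  ultimately show False by linarith
qed

lemma deriv_limit_zero:
  fixes x d :: "real \<Rightarrow> real"
  assumes dx: "\<And>t. t \<ge> T \<Longrightarrow> (x has_real_derivative d t) (at t)"
    and lim: "(d \<longlongrightarrow> D) at_top" and b: "\<And>t. t \<ge> T \<Longrightarrow> \<bar>x t\<bar> \<le> C"
  shows "D = 0"
proof -
  have "\<not> D > 0" by (rule deriv_limit_zero_pos[OF dx lim b])
  moreover have "\<not> - D > 0"
    by (rule deriv_limit_zero_pos[of T "\<lambda>t. - x t" "\<lambda>t. - d t" _ C])
      (use dx lim b in \<open>auto intro: DERIV_minus tendsto_minus\<close>)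
  ultimately show ?thesis by linarith
qed

lemma mono_from_deriv:
  fixes x d :: "real \<Rightarrow> real"
  assumes dx: "\<And>t. t \<ge> T \<Longrightarrow> (x has_real_derivative d t) (at t)"
  shows "(\<And>t. t \<ge> T \<Longrightarrow> d t \<ge> 0) \<Longrightarrow> mono_on {T..} x"
    and "(\<And>t. t \<ge> T \<Longrightarrow> d t \<le> 0) \<Longrightarrow> antimono_on {T..} x"
proof -
  assume p: "\<And>t. t \<ge> T \<Longrightarrow> d t \<ge> 0"
  show "mono_on {T..} x"
  proof (rule mono_onI)
    fix r s assume "r \<in> {T..}" "s \<in> {T..}" "r \<le> s"
    show "x r \<le> x s"
    proof (rule DERIV_nonneg_imp_nondecreasing[OF \<open>r \<le> s\<close>])
      fix y assume "r \<le> y" "y \<le> s"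
      then show "\<exists>z. (x has_real_derivative z) (at y) \<and> 0 \<le> z"
        using dx[of y] p[of y] \<open>r \<in> {T..}\<close> by auto
    qed
  qed
next
  assume p: "\<And>t. t \<ge> T \<Longrightarrow> d t \<le> 0"
  show "antimono_on {T..} x"
  proof (rule monotone_onI)
    fix r s assume "r \<in> {T..}" "s \<in> {T..}" "r \<le> s"
    show "x s \<le> x r"
    proof (rule DERIV_nonpos_imp_nonincreasing[OF \<open>r \<le> s\<close>])
      fix y assume "r \<le> y" "y \<le> s"
      then show "\<exists>z. (x has_real_derivative z) (at y) \<and> z \<le> 0"
        using dx[of y] p[of y] \<open>r \<in> {T..}\<close> by auto
    qed
  qed
qed


lemma lin3:
  fixes u v w c1 c2 c3 d :: real
  assumes "\<bar>u\<bar> \<le> c1 * d" "\<bar>v\<bar> \<le> c2 * d" "\<bar>w\<bar> \<le> c3 * d"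
  shows "\<bar>u + v + w\<bar> \<le> (c1 + c2 + c3) * d"
proof -
  have "\<bar>u + v + w\<bar> \<le> \<bar>u\<bar> + \<bar>v\<bar> + \<bar>w\<bar>" by linarith
  then show ?thesis using assms by (simp add: distrib_right)
qed

lemma lip_beta: "L-lipschitz_on UNIV f \<Longrightarrow> \<bar>f x - f y\<bar> \<le> L * \<bar>x - y\<bar>"
  using lipschitz_onD[of L UNIV f x y] by (simp add: dist_real_def)

lemma Fa_mono:
  assumes "lam \<ge> 0" "epsa > 0" "sigB > 0" "y \<le> y'"
  shows "Fa lam q sigB epsa ba x y \<le> Fa lam q sigB epsa ba x y'"
proof -
  have "Fa lam q sigB epsa ba x y' - Fa lam q sigB epsa ba x y
      = lam * (y' - y) + epsa * sigB * (\<bar>y'\<bar>^3 * y' - \<bar>y\<bar>^3 * y)"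
    by (simp add: Fa_def algebra_simps)
  moreover have "0 \<le> lam * (y' - y)" using assms by simp
  moreover have "0 \<le> epsa * sigB * (\<bar>y'\<bar>^3 * y' - \<bar>y\<bar>^3 * y)"
    using assms quart_mono[OF assms(4)] by simp
  ultimately show ?thesis by linarith
qed

lemma Fs_mono:
  assumes "lam \<ge> 0" "epsa > 0" "sigB > 0" "x \<le> x'"
  shows "Fs lam q sigB epsa bs x y \<le> Fs lam q sigB epsa bs x' y"
proof -
  have "Fs lam q sigB epsa bs x' y - Fs lam q sigB epsa bs x y
      = lam * (x' - x) + epsa * sigB * (\<bar>x'\<bar>^3 * x' - \<bar>x\<bar>^3 * x)"
    by (simp add: Fs_def algebra_simps)
  moreover have "0 \<le> lam * (x' - x)" using assms by simp
  moreover have "0 \<le> epsa * sigB * (\<bar>x'\<bar>^3 * x' - \<bar>x\<bar>^3 * x)"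
    using assms quart_mono[OF assms(4)] by simp
  ultimately show ?thesis by linarith
qed

lemma Fa_lipx:
  assumes "lam \<ge> 0" "epsa > 0" "sigB > 0" "q > 0" "La-lipschitz_on UNIV ba"
    "\<bar>x\<bar> \<le> M" "\<bar>x'\<bar> \<le> M"
  shows "\<bar>Fa lam q sigB epsa ba x y - Fa lam q sigB epsa ba x' y\<bar>
     \<le> (lam + 2 * epsa * sigB * (4 * M^3) + q * La) * \<bar>x - x'\<bar>"
proof -
  have e: "Fa lam q sigB epsa ba x y - Fa lam q sigB epsa ba x' y
     = (- lam * (x - x')) + (- (2 * epsa * sigB) * (\<bar>x\<bar>^3 * x - \<bar>x'\<bar>^3 * x')) + q * (ba x - ba x')"
    by (simp add: Fa_def algebra_simps)
  show ?thesis unfolding e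
  proof (rule lin3)
    show "\<bar>- lam * (x - x')\<bar> \<le> lam * \<bar>x - x'\<bar>" using assms by (simp add: abs_mult)
    have "\<bar>- (2 * epsa * sigB) * (\<bar>x\<bar>^3 * x - \<bar>x'\<bar>^3 * x')\<bar> = (2 * epsa * sigB) * \<bar>\<bar>x\<bar>^3 * x - \<bar>x'\<bar>^3 * x'\<bar>"
      using assms by (simp add: abs_mult)
    also have "\<dots> \<le> (2 * epsa * sigB) * (4 * M^3 * \<bar>x - x'\<bar>)"
      using assms quart_lip[of x M x'] by (intro mult_left_mono) auto
    finally show "\<bar>- (2 * epsa * sigB) * (\<bar>x\<bar>^3 * x - \<bar>x'\<bar>^3 * x')\<bar> \<le> 2 * epsa * sigB * (4 * M^3) * \<bar>x - x'\<bar>"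
      by (simp add: mult.assoc)
    have "\<bar>q * (ba x - ba x')\<bar> = q * \<bar>ba x - ba x'\<bar>" using assms by (simp add: abs_mult)
    also have "\<dots> \<le> q * (La * \<bar>x - x'\<bar>)" using assms lip_beta[OF assms(5)] by (intro mult_left_mono) auto
    finally show "\<bar>q * (ba x - ba x')\<bar> \<le> q * La * \<bar>x - x'\<bar>" by (simp add: mult.assoc)
  qed
qed

lemma Fa_lipy:
  assumes "lam \<ge> 0" "epsa > 0" "sigB > 0" "\<bar>y\<bar> \<le> M" "\<bar>y'\<bar> \<le> M"
  shows "\<bar>Fa lam q sigB epsa ba x y - Fa lam q sigB epsa ba x y'\<bar>
     \<le> (lam + epsa * sigB * (4 * M^3) + 0) * \<bar>y - y'\<bar>"
proof -
  have e: "Fa lam q sigB epsa ba x y - Fa lam q sigB epsa ba x y'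
     = (lam * (y - y')) + ((epsa * sigB) * (\<bar>y\<bar>^3 * y - \<bar>y'\<bar>^3 * y')) + 0"
    by (simp add: Fa_def algebra_simps)
  show ?thesis unfolding e
  proof (rule lin3)
    show "\<bar>lam * (y - y')\<bar> \<le> lam * \<bar>y - y'\<bar>" using assms by (simp add: abs_mult)
    have "\<bar>(epsa * sigB) * (\<bar>y\<bar>^3 * y - \<bar>y'\<bar>^3 * y')\<bar> = (epsa * sigB) * \<bar>\<bar>y\<bar>^3 * y - \<bar>y'\<bar>^3 * y'\<bar>"
      using assms by (simp add: abs_mult)
    also have "\<dots> \<le> (epsa * sigB) * (4 * M^3 * \<bar>y - y'\<bar>)"
      using assms quart_lip[of y M y'] by (intro mult_left_mono) auto
    finally show "\<bar>(epsa * sigB) * (\<bar>y\<bar>^3 * y - \<bar>y'\<bar>^3 * y')\<bar> \<le> epsa * sigB * (4 * M^3) * \<bar>y - y'\<bar>"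
      by (simp add: mult.assoc)
    show "\<bar>0::real\<bar> \<le> 0 * \<bar>y - y'\<bar>" by simp
  qed
qed

lemma Fs_lipx:
  assumes "lam \<ge> 0" "epsa > 0" "sigB > 0" "\<bar>x\<bar> \<le> M" "\<bar>x'\<bar> \<le> M"
  shows "\<bar>Fs lam q sigB epsa bs x y - Fs lam q sigB epsa bs x' y\<bar>
     \<le> (lam + epsa * sigB * (4 * M^3) + 0) * \<bar>x - x'\<bar>"
proof -
  have e: "Fs lam q sigB epsa bs x y - Fs lam q sigB epsa bs x' y
     = (lam * (x - x')) + ((epsa * sigB) * (\<bar>x\<bar>^3 * x - \<bar>x'\<bar>^3 * x')) + 0"
    by (simp add: Fs_def algebra_simps)
  show ?thesis unfolding e
  proof (rule lin3)
    show "\<bar>lam * (x - x')\<bar> \<le> lam * \<bar>x - x'\<bar>" using assms by (simp add: abs_mult)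
    have "\<bar>(epsa * sigB) * (\<bar>x\<bar>^3 * x - \<bar>x'\<bar>^3 * x')\<bar> = (epsa * sigB) * \<bar>\<bar>x\<bar>^3 * x - \<bar>x'\<bar>^3 * x'\<bar>"
      using assms by (simp add: abs_mult)
    also have "\<dots> \<le> (epsa * sigB) * (4 * M^3 * \<bar>x - x'\<bar>)"
      using assms quart_lip[of x M x'] by (intro mult_left_mono) auto
    finally show "\<bar>(epsa * sigB) * (\<bar>x\<bar>^3 * x - \<bar>x'\<bar>^3 * x')\<bar> \<le> epsa * sigB * (4 * M^3) * \<bar>x - x'\<bar>"
      by (simp add: mult.assoc)
    show "\<bar>0::real\<bar> \<le> 0 * \<bar>x - x'\<bar>" by simp
  qed
qed

lemma Fs_lipy:
  assumes "lam \<ge> 0" "epsa > 0" "sigB > 0" "q > 0" "Ls-lipschitz_on UNIV bs"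
    "\<bar>y\<bar> \<le> M" "\<bar>y'\<bar> \<le> M"
  shows "\<bar>Fs lam q sigB epsa bs x y - Fs lam q sigB epsa bs x y'\<bar>
     \<le> (lam + sigB * (4 * M^3) + q * Ls) * \<bar>y - y'\<bar>"
proof -
  have e: "Fs lam q sigB epsa bs x y - Fs lam q sigB epsa bs x y'
     = (- lam * (y - y')) + (- sigB * (\<bar>y\<bar>^3 * y - \<bar>y'\<bar>^3 * y')) + q * (bs y - bs y')"
    by (simp add: Fs_def algebra_simps)
  show ?thesis unfolding e
  proof (rule lin3)
    show "\<bar>- lam * (y - y')\<bar> \<le> lam * \<bar>y - y'\<bar>" using assms by (simp add: abs_mult)
    have "\<bar>- sigB * (\<bar>y\<bar>^3 * y - \<bar>y'\<bar>^3 * y')\<bar> = sigB * \<bar>\<bar>y\<bar>^3 * y - \<bar>y'\<bar>^3 * y'\<bar>"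
      using assms by (simp add: abs_mult)
    also have "\<dots> \<le> sigB * (4 * M^3 * \<bar>y - y'\<bar>)"
      using assms quart_lip[of y M y'] by (intro mult_left_mono) auto
    finally show "\<bar>- sigB * (\<bar>y\<bar>^3 * y - \<bar>y'\<bar>^3 * y')\<bar> \<le> sigB * (4 * M^3) * \<bar>y - y'\<bar>"
      by (simp add: mult.assoc)
    have "\<bar>q * (bs y - bs y')\<bar> = q * \<bar>bs y - bs y'\<bar>" using assms by (simp add: abs_mult)
    also have "\<dots> \<le> q * (Ls * \<bar>y - y'\<bar>)" using assms lip_beta[OF assms(5)] by (intro mult_left_mono) auto
    finally show "\<bar>q * (bs y - bs y')\<bar> \<le> q * Ls * \<bar>y - y'\<bar>" by (simp add: mult.assoc)
  qed
qed


lemma box_exists: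
  assumes lam: "lam \<ge> 0" and q: "q > 0" and sig: "sigB > 0" and e0: "0 < epsa" and e2: "epsa < 2"
    and La: "La-lipschitz_on UNIV ba" and Ls: "Ls-lipschitz_on UNIV bs"
    and ba0: "\<And>x. ba x \<ge> 0" and bs0: "\<And>x. bs x \<ge> 0"
  shows "\<exists>A B. A \<ge> X \<and> B \<ge> Y \<and> A > 0 \<and> B > 0 \<and>
     Fa lam q sigB epsa ba A B < 0 \<and> Fs lam q sigB epsa bs A B < 0 \<and>
     Fa lam q sigB epsa ba (-A) (-B) > 0 \<and> Fs lam q sigB epsa bs (-A) (-B) > 0"
proof -
  define c where "c = (epsa + 2) / 2"
  define k where "k = root 4 c"
  have c0: "c > 0" unfolding c_def using e0 by simp
  have k0: "k > 0" unfolding k_def using c0 by simp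
  have k4: "k^4 = c" unfolding k_def using c0 by simp
  define m where "m = sigB * min (epsa * (2 - c)) (c - epsa)"
  have m1: "m \<le> sigB * (epsa * (2 - c))" unfolding m_def using sig by (intro mult_left_mono) auto
  have m2: "m \<le> sigB * (c - epsa)" unfolding m_def using sig by (intro mult_left_mono) auto
  have m0: "m > 0" unfolding m_def c_def using sig e0 e2 by simp
  have La0: "La \<ge> 0" using La lipschitz_on_nonneg by blast
  have Ls0: "Ls \<ge> 0" using Ls lipschitz_on_nonneg by blast
  define P where "P = lam * (1 + k) + q * La + q * Ls * k"
  define Q where "Q = q * (\<bar>ba 0\<bar> + \<bar>bs 0\<bar>)"
  have P0: "P \<ge> 0" unfolding P_def using lam q La0 Ls0 k0 by simp
  have Q0: "Q \<ge> 0" unfolding Q_def using q by simp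
  define A where "A = max (max 1 X) (max (Y / k) ((P + Q + 1) / m))"
  define B where "B = k * A"
  have A1: "A \<ge> 1" unfolding A_def by simp
  have AX: "A \<ge> X" unfolding A_def by simp
  have "A \<ge> Y / k" unfolding A_def by simp
  then have BY: "B \<ge> Y" unfolding B_def using k0 by (simp add: field_simps)
  have B0: "B > 0" unfolding B_def using k0 A1 by simp
  define A4 where "A4 = A^4"
  have A40: "A4 \<ge> 0" unfolding A4_def by simp
  have key: "m * A4 > P * A + Q"
  proof -
    have "A \<ge> (P + Q + 1) / m" unfolding A_def by simp
    then have mA: "m * A \<ge> P + Q + 1" using m0 by (simp add: field_simps)
    have A3: "A^3 \<ge> A"
    proof -
      have "A^2 \<ge> 1" using A1 by (simp add: one_le_power)
      then have "A * A^2 \<ge> A * 1" using A1 by (intro mult_left_mono) auto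
      then show ?thesis by (simp add: power2_eq_square power3_eq_cube)
    qed
    have "m * A4 = (m * A) * A^3" unfolding A4_def by (simp add: power3_eq_cube power4_eq_xxxx)
    also have "\<dots> \<ge> (P + Q + 1) * A^3" using mA A1 by (intro mult_right_mono) auto
    finally have "m * A4 \<ge> (P + Q + 1) * A^3" .
    moreover have "(P + Q + 1) * A^3 \<ge> (P + Q + 1) * A" using A3 P0 Q0 by (intro mult_left_mono) auto
    moreover have "Q * A \<ge> Q" using Q0 A1 by (simp add: mult_le_cancel_left1)
    ultimately show ?thesis using A1 by (simp add: algebra_simps)
  qed
  have qa: "\<bar>A\<bar>^3 * A = A4" unfolding A4_def using A1 by (simp add: power3_eq_cube power4_eq_xxxx)
  have B4: "B^4 = c * A4" unfolding B_def A4_def by (simp add: power_mult_distrib k4)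
  have qb: "\<bar>B\<bar>^3 * B = c * A4" using B0 B4 by (simp add: power3_eq_cube power4_eq_xxxx)
  have qma: "\<bar>-A\<bar>^3 * (-A) = - A4" using qa A1 by simp
  have qmb: "\<bar>-B\<bar>^3 * (-B) = - (c * A4)" using qb B0 by simp
  have lin: "lam * (B - A) \<le> lam * (1 + k) * A" and lin': "lam * (A - B) \<le> lam * (1 + k) * A"
  proof -
    have "B - A \<le> (1 + k) * A" "A - B \<le> (1 + k) * A" unfolding B_def using A1 k0 by (simp_all add: algebra_simps)
    then show "lam * (B - A) \<le> lam * (1 + k) * A" "lam * (A - B) \<le> lam * (1 + k) * A"
      using lam by (simp_all add: mult_left_mono mult.assoc)
  qed
  have PA: "P * A = lam * (1 + k) * A + q * La * A + q * Ls * k * A" unfolding P_def by (simp add: algebra_simps)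
  have QQ: "Q = q * \<bar>ba 0\<bar> + q * \<bar>bs 0\<bar>" unfolding Q_def by (simp add: algebra_simps)
  have t1: "0 \<le> q * La * A" "0 \<le> q * Ls * k * A" "0 \<le> q * \<bar>ba 0\<bar>" "0 \<le> q * \<bar>bs 0\<bar>"
    using q La0 Ls0 k0 A1 by simp_all
  have bA: "q * ba A \<le> q * \<bar>ba 0\<bar> + q * La * A"
  proof -
    have "ba A \<le> \<bar>ba 0\<bar> + La * A" using lip_beta[OF La, of A 0] A1 by (simp add: abs_le_iff) linarith
    then have "q * ba A \<le> q * (\<bar>ba 0\<bar> + La * A)" using q by (intro mult_left_mono) auto
    then show ?thesis by (simp add: distrib_left mult.assoc)
  qed
  have bB: "q * bs B \<le> q * \<bar>bs 0\<bar> + q * Ls * k * A"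
  proof -
    have "bs B \<le> \<bar>bs 0\<bar> + Ls * B" using lip_beta[OF Ls, of B 0] B0 by (simp add: abs_le_iff) linarith
    then have "q * bs B \<le> q * (\<bar>bs 0\<bar> + Ls * B)" using q by (intro mult_left_mono) auto
    then show ?thesis unfolding B_def by (simp add: distrib_left mult.assoc)
  qed
  have pa: "0 \<le> q * ba (-A)" using q ba0 by simp
  have pb: "0 \<le> q * bs (-B)" using q bs0 by simp
  have h1: "epsa * sigB * (c * A4) - 2 * epsa * sigB * A4 \<le> - (m * A4)"
  proof -
    have "epsa * sigB * (c * A4) - 2 * epsa * sigB * A4 = - ((sigB * (epsa * (2 - c))) * A4)" by (simp add: algebra_simps)
    moreover have "m * A4 \<le> (sigB * (epsa * (2 - c))) * A4" using m1 A40 by (rule mult_right_mono)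
    ultimately show ?thesis by linarith
  qed
  have h2: "epsa * sigB * A4 - sigB * (c * A4) \<le> - (m * A4)"
  proof -
    have "epsa * sigB * A4 - sigB * (c * A4) = - ((sigB * (c - epsa)) * A4)" by (simp add: algebra_simps)
    moreover have "m * A4 \<le> (sigB * (c - epsa)) * A4" using m2 A40 by (rule mult_right_mono)
    ultimately show ?thesis by linarith
  qed
  have U1: "Fa lam q sigB epsa ba A B < 0"
  proof -
    have "Fa lam q sigB epsa ba A B = lam * (B - A) + (epsa * sigB * (c * A4) - 2 * epsa * sigB * A4) + q * ba A"
      unfolding Fa_def by (simp only: mult.assoc qa qb) (simp add: algebra_simps)
    then show ?thesis using lin h1 bA key PA QQ t1 by linarith
  qed
  have U2: "Fs lam q sigB epsa bs A B < 0"
  proof -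
    have "Fs lam q sigB epsa bs A B = lam * (A - B) + (epsa * sigB * A4 - sigB * (c * A4)) + q * bs B"
      unfolding Fs_def by (simp only: mult.assoc qa qb) (simp add: algebra_simps)
    then show ?thesis using lin' h2 bB key PA QQ t1 by linarith
  qed
  have L1: "Fa lam q sigB epsa ba (-A) (-B) > 0"
  proof -
    have "Fa lam q sigB epsa ba (-A) (-B) = - (lam * (B - A)) - (epsa * sigB * (c * A4) - 2 * epsa * sigB * A4) + q * ba (-A)"
      unfolding Fa_def by (simp only: mult.assoc qma qmb) (simp add: algebra_simps)
    then show ?thesis using lin h1 pa key PA QQ t1 by linarith
  qed
  have L2: "Fs lam q sigB epsa bs (-A) (-B) > 0"
  proof -
    have "Fs lam q sigB epsa bs (-A) (-B) = - (lam * (A - B)) - (epsa * sigB * A4 - sigB * (c * A4)) + q * bs (-B)"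
      unfolding Fs_def by (simp only: mult.assoc qma qmb) (simp add: algebra_simps)
    then show ?thesis using lin' h2 pb key PA QQ t1 by linarith
  qed
  show ?thesis using AX BY A1 B0 U1 U2 L1 L2 by (intro exI[of _ A] exI[of _ B]) auto
qed


lemma div_lip:
  fixes a b g K L d :: real
  assumes "g > 0" "\<bar>a - b\<bar> \<le> K * d" "K / g \<le> L" "d \<ge> 0"
  shows "\<bar>a / g - b / g\<bar> \<le> L * d"
proof -
  have "\<bar>a / g - b / g\<bar> = \<bar>a - b\<bar> / g" using assms(1) by (simp add: diff_divide_distrib[symmetric])
  also have "\<dots> \<le> (K * d) / g" using assms by (intro divide_right_mono) auto
  also have "\<dots> = (K / g) * d" by simp
  also have "\<dots> \<le> L * d" using assms by (intro mult_right_mono) auto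
  finally show ?thesis .
qed

lemma sign_const:
  fixes h :: "real \<Rightarrow> real"
  assumes c: "continuous_on {T..} h" and nz: "\<And>t. t \<ge> T \<Longrightarrow> h t \<noteq> 0"
  shows "(\<forall>t\<ge>T. h t > 0) \<or> (\<forall>t\<ge>T. h t < 0)"
proof (cases "h T > 0")
  case True
  have "h t > 0" if t: "t \<ge> T" for t
  proof (rule ccontr)
    assume "\<not> h t > 0"
    then have "h t \<le> 0" by simp
    moreover have "continuous_on {T..t} h" using c by (rule continuous_on_subset) auto
    ultimately obtain x where "T \<le> x" "x \<le> t" "h x = 0" using IVT2'[of h t 0 T] True t by auto
    then show False using nz[of x] by simp
  qed
  then show ?thesis by blast
next
  case False
  then have hT: "h T < 0" using nz[of T] by simp
  have "h t < 0" if t: "t \<ge> T" for t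
  proof (rule ccontr)
    assume "\<not> h t < 0"
    then have "h t \<ge> 0" by simp
    moreover have "continuous_on {T..t} h" using c by (rule continuous_on_subset) auto
    ultimately obtain x where "T \<le> x" "x \<le> t" "h x = 0" using IVT'[of h T 0 t] hT t by auto
    then show False using nz[of x] by simp
  qed
  then show ?thesis by blast
qed

lemma sq_sum_zero:
  fixes a b E :: real
  assumes "(min a 0)^2 + (min b 0)^2 \<le> ((min a0 0)^2 + (min b0 0)^2) * E" "a0 \<ge> 0" "b0 \<ge> 0"
  shows "a \<ge> 0 \<and> b \<ge> 0"
proof -
  have "(min a 0)^2 + (min b 0)^2 \<le> 0" using assms by simp
  moreover have "0 \<le> (min a 0)^2" "0 \<le> (min b 0)^2" by simp_all
  ultimately have "(min a 0)^2 = 0" "(min b 0)^2 = 0" by linarith+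
  then show ?thesis by (simp add: min_def split: if_splits)
qed

theorem theorem4p6:
  fixes gama gams lam q sigB epsa Ta0 Ts0 :: real
    and betaa betas Ta Ts :: "real \<Rightarrow> real"
  assumes "gama > 0" and "gams > 0" and "lam \<ge> 0" and "q > 0" and "sigB > 0"
    and "0 < epsa" and "epsa < 2"
    and "\<exists>L. L-lipschitz_on UNIV betaa" and "\<exists>L. L-lipschitz_on UNIV betas"
    and "\<And>x. betaa x \<ge> 0" and "\<And>x. betas x > 0"
    and "Ta0 \<ge> 0" and "Ts0 \<ge> 0"
    and "\<And>t. t \<ge> 0 \<Longrightarrow>
           (Ta has_real_derivative (Fa lam q sigB epsa betaa (Ta t) (Ts t) / gama)) (at t within {0..})"
    and "\<And>t. t \<ge> 0 \<Longrightarrow>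
           (Ts has_real_derivative (Fs lam q sigB epsa betas (Ta t) (Ts t) / gams)) (at t within {0..})"
    and "Ta 0 = Ta0" and "Ts 0 = Ts0"
  shows "(\<exists>p. is_equilibrium lam q sigB epsa betaa betas p \<and>
              ((\<lambda>t. (Ta t, Ts t)) \<longlongrightarrow> p) at_top)
         \<and> (\<exists>T\<ge>0. (mono_on {T..} Ta \<or> antimono_on {T..} Ta) \<and>
                    (mono_on {T..} Ts \<or> antimono_on {T..} Ts))"
proof -
  have gama: "gama > 0" and gams: "gams > 0" and lam: "lam \<ge> 0" and q: "q > 0" and sig: "sigB > 0"
    and e0: "0 < epsa" and e2: "epsa < 2" using assms by auto
  obtain La where La: "La-lipschitz_on UNIV betaa" using assms(8) by blast
  obtain Ls where Ls: "Ls-lipschitz_on UNIV betas" using assms(9) by blast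
  have La0: "La \<ge> 0" using La lipschitz_on_nonneg by blast
  have Ls0: "Ls \<ge> 0" using Ls lipschitz_on_nonneg by blast
  define f1 where "f1 x y = Fa lam q sigB epsa betaa x y / gama" for x y
  define f2 where "f2 x y = Fs lam q sigB epsa betas x y / gams" for x y
  have atw: "at t within {0..} = at t" if "t \<ge> 1" for t :: real
  proof -
    have "interior {0::real..} = {0<..}" by (rule interior_Ici[of "-1"]) simp
    then show ?thesis using that by (intro at_within_interior) auto
  qed
  have dTa: "(Ta has_real_derivative f1 (Ta t) (Ts t)) (at t)" if "t \<ge> 1" for t
    using assms(14)[of t] that atw[OF that] unfolding f1_def by simp
  have dTs: "(Ts has_real_derivative f2 (Ta t) (Ts t)) (at t)" if "t \<ge> 1" for t
    using assms(15)[of t] that atw[OF that] unfolding f2_def by simp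
  obtain A B where AB: "A \<ge> \<bar>Ta 1\<bar>" "B \<ge> \<bar>Ts 1\<bar>" "A > 0" "B > 0"
    "Fa lam q sigB epsa betaa A B < 0" "Fs lam q sigB epsa betas A B < 0"
    "Fa lam q sigB epsa betaa (-A) (-B) > 0" "Fs lam q sigB epsa betas (-A) (-B) > 0"
    using box_exists[OF lam q sig e0 e2 La Ls assms(10) less_imp_le[OF assms(11)], of "\<bar>Ta 1\<bar>" "\<bar>Ts 1\<bar>"]
    by blast
  have mono1: "f1 x y \<le> f1 x y'" if "y \<le> y'" for x y y'
    unfolding f1_def using Fa_mono[OF lam e0 sig that] gama by (simp add: divide_right_mono)
  have mono2: "f2 x y \<le> f2 x' y" if "x \<le> x'" for x x' y
    unfolding f2_def using Fs_mono[OF lam e0 sig that] gams by (simp add: divide_right_mono)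
  have bx1: "f1 A y < 0" if "y \<le> B" for y
  proof -
    have "f1 A B < 0" unfolding f1_def using AB(5) gama by (simp add: divide_neg_pos)
    then show ?thesis using mono1[OF that, of A] by linarith
  qed
  have bx2: "f1 (-A) y > 0" if "-B \<le> y" for y
  proof -
    have "f1 (-A) (-B) > 0" unfolding f1_def using AB(7) gama by simp
    then show ?thesis using mono1[OF that, of "-A"] by linarith
  qed
  have bx3: "f2 x B < 0" if "x \<le> A" for x
  proof -
    have "f2 A B < 0" unfolding f2_def using AB(6) gams by (simp add: divide_neg_pos)
    then show ?thesis using mono2[OF that, of B] by linarith
  qed
  have bx4: "f2 x (-B) > 0" if "-A \<le> x" for x
  proof -
    have "f2 (-A) (-B) > 0" unfolding f2_def using AB(8) gams by simp
    then show ?thesis using mono2[OF that, of "-B"] by linarith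
  qed
  define g where "g i = (if i = (0::nat) then (\<lambda>t. Ta t - A) else if i = 1 then (\<lambda>t. - A - Ta t)
     else if i = 2 then (\<lambda>t. Ts t - B) else (\<lambda>t. - B - Ts t))" for i
  define g' where "g' i t = (if i = (0::nat) then f1 (Ta t) (Ts t) else if i = 1 then - f1 (Ta t) (Ts t)
     else if i = 2 then f2 (Ta t) (Ts t) else - f2 (Ta t) (Ts t))" for i t
  have inv: "g i t \<le> 0" if "i \<in> {0,1,2,3}" "t \<ge> 1" for i t
  proof (rule stay_in[of "{0,1,2,3}" 1 g g', OF _ _ _ _ that(2,1)])
    show "finite {0,1,2,3::nat}" by simp
  next
    fix i :: nat and t :: real assume i: "i \<in> {0,1,2,3}" and t: "1 \<le> t"
    from i consider "i = 0" | "i = 1" | "i = 2" | "i = 3" by auto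
    then show "(g i has_real_derivative g' i t) (at t)"
    proof cases
      case 1 then show ?thesis unfolding g_def g'_def using dTa[OF t] by (auto intro!: derivative_eq_intros)
    next
      case 2 then show ?thesis unfolding g_def g'_def using dTa[OF t] by (auto intro!: derivative_eq_intros)
    next
      case 3 then show ?thesis unfolding g_def g'_def using dTs[OF t] by (auto intro!: derivative_eq_intros)
    next
      case 4 then show ?thesis unfolding g_def g'_def using dTs[OF t] by (auto intro!: derivative_eq_intros)
    qed
  next
    fix i :: nat assume "i \<in> {0,1,2,3}"
    then show "g i 1 \<le> 0" using AB(1,2) unfolding g_def by (auto simp: abs_le_iff)
  next
    fix i :: nat and t :: real assume i: "i \<in> {0,1,2,3}" and t: "1 \<le> t"
      and all: "\<forall>j\<in>{0,1,2,3}. g j t \<le> 0" and z: "g i t = 0"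
    have box: "Ta t \<le> A" "- A \<le> Ta t" "Ts t \<le> B" "- B \<le> Ts t"
      using all unfolding g_def by auto
    from i consider "i = 0" | "i = 1" | "i = 2" | "i = 3" by auto
    then show "g' i t < 0"
    proof cases
      case 1
      then have "Ta t = A" using z unfolding g_def by simp
      then show ?thesis using 1 bx1[OF box(3)] unfolding g'_def by simp
    next
      case 2
      then have "Ta t = - A" using z unfolding g_def by simp
      then show ?thesis using 2 bx2[OF box(4)] unfolding g'_def by simp
    next
      case 3
      then have "Ts t = B" using z unfolding g_def by simp
      then show ?thesis using 3 bx3[OF box(1)] unfolding g'_def by simp
    next
      case 4
      then have "Ts t = - B" using z unfolding g_def by simp
      then show ?thesis using 4 bx4[OF box(2)] unfolding g'_def by simp
    qed
  qed
  define M where "M = max A B"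
  have bnd: "\<bar>Ta t\<bar> \<le> M \<and> \<bar>Ts t\<bar> \<le> M" if "t \<ge> 1" for t
    using inv[of 0 t] inv[of 1 t] inv[of 2 t] inv[of 3 t] that unfolding g_def M_def by auto
  have M0: "M \<ge> 0" unfolding M_def using AB by simp
  define Kax where "Kax = lam + 2 * epsa * sigB * (4 * M^3) + q * La"
  define Kay where "Kay = lam + epsa * sigB * (4 * M^3) + 0"
  define Ksy where "Ksy = lam + sigB * (4 * M^3) + q * Ls"
  define L where "L = Kax / gama + Kay / gama + Kay / gams + Ksy / gams"
  have K0: "Kax / gama \<ge> 0" "Kay / gama \<ge> 0" "Kay / gams \<ge> 0" "Ksy / gams \<ge> 0"
    unfolding Kax_def Kay_def Ksy_def using gama gams lam e0 sig q La0 Ls0 M0 by simp_all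
  have L0: "L \<ge> 0" unfolding L_def using K0 by simp
  have LK: "Kax / gama \<le> L" "Kay / gama \<le> L" "Kay / gams \<le> L" "Ksy / gams \<le> L"
    unfolding L_def using K0 by linarith+
  have lip1x: "\<bar>f1 x y - f1 x' y\<bar> \<le> L * \<bar>x - x'\<bar>" if "\<bar>x\<bar> \<le> M" "\<bar>x'\<bar> \<le> M" "\<bar>y\<bar> \<le> M" for x x' y
    unfolding f1_def
    by (rule div_lip[OF gama Fa_lipx[OF lam e0 sig q La that(1,2)] LK(1)[unfolded Kax_def]]) simp
  have lip1y: "\<bar>f1 x y - f1 x y'\<bar> \<le> L * \<bar>y - y'\<bar>" if "\<bar>x\<bar> \<le> M" "\<bar>y\<bar> \<le> M" "\<bar>y'\<bar> \<le> M" for x y y'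
    unfolding f1_def
    by (rule div_lip[OF gama Fa_lipy[OF lam e0 sig that(2,3)] LK(2)[unfolded Kay_def]]) simp
  have lip2x: "\<bar>f2 x y - f2 x' y\<bar> \<le> L * \<bar>x - x'\<bar>" if "\<bar>x\<bar> \<le> M" "\<bar>x'\<bar> \<le> M" "\<bar>y\<bar> \<le> M" for x x' y
    unfolding f2_def
    by (rule div_lip[OF gams Fs_lipx[OF lam e0 sig that(1,2)] LK(3)[unfolded Kay_def]]) simp
  have lip2y: "\<bar>f2 x y - f2 x y'\<bar> \<le> L * \<bar>y - y'\<bar>" if "\<bar>x\<bar> \<le> M" "\<bar>y\<bar> \<le> M" "\<bar>y'\<bar> \<le> M" for x y y'
    unfolding f2_def
    by (rule div_lip[OF gams Fs_lipy[OF lam e0 sig q Ls that(2,3)] LK(4)[unfolded Ksy_def]]) simp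
  have quad: "((min (f1 (Ta t) (Ts t)) 0)^2 + (min (f2 (Ta t) (Ts t)) 0)^2
     \<le> ((min (f1 (Ta T) (Ts T)) 0)^2 + (min (f2 (Ta T) (Ts T)) 0)^2) * exp (8 * L * (t - T)))
     \<and> ((min (- f1 (Ta t) (Ts t)) 0)^2 + (min (- f2 (Ta t) (Ts t)) 0)^2
     \<le> ((min (- f1 (Ta T) (Ts T)) 0)^2 + (min (- f2 (Ta T) (Ts T)) 0)^2) * exp (8 * L * (t - T)))"
    if T: "1 \<le> T" "T \<le> t" for T t
  proof -
    have dx: "\<And>s. s \<ge> T \<Longrightarrow> (Ta has_real_derivative f1 (Ta s) (Ts s)) (at s)" using dTa T by simp
    have dy: "\<And>s. s \<ge> T \<Longrightarrow> (Ts has_real_derivative f2 (Ta s) (Ts s)) (at s)" using dTs T by simp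
    have bd: "\<And>s. s \<ge> T \<Longrightarrow> \<bar>Ta s\<bar> \<le> M \<and> \<bar>Ts s\<bar> \<le> M" using bnd T by simp
    show ?thesis
      using quadrant[OF L0 mono1 mono2 lip1x lip1y lip2x lip2y dx dy bd T(2)] by blast
  qed
  have mres: "\<exists>T\<ge>1. (mono_on {T..} Ta \<or> antimono_on {T..} Ta) \<and> (mono_on {T..} Ts \<or> antimono_on {T..} Ts)"
  proof (cases "\<exists>t0\<ge>1. f1 (Ta t0) (Ts t0) \<ge> 0 \<and> f2 (Ta t0) (Ts t0) \<ge> 0")
    case True
    then obtain t0 where t0: "t0 \<ge> 1" "f1 (Ta t0) (Ts t0) \<ge> 0" "f2 (Ta t0) (Ts t0) \<ge> 0" by blast
    have pos: "f1 (Ta t) (Ts t) \<ge> 0 \<and> f2 (Ta t) (Ts t) \<ge> 0" if "t \<ge> t0" for t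
      using quad[OF t0(1) that] t0(2,3) by (intro sq_sum_zero) blast+
    have "mono_on {t0..} Ta"
      by (rule mono_from_deriv(1)[of t0 Ta "\<lambda>t. f1 (Ta t) (Ts t)"]) (use dTa t0 pos in auto)
    moreover have "mono_on {t0..} Ts"
      by (rule mono_from_deriv(1)[of t0 Ts "\<lambda>t. f2 (Ta t) (Ts t)"]) (use dTs t0 pos in auto)
    ultimately show ?thesis using t0(1) by blast
  next
    case False1: False
    show ?thesis
    proof (cases "\<exists>t0\<ge>1. f1 (Ta t0) (Ts t0) \<le> 0 \<and> f2 (Ta t0) (Ts t0) \<le> 0")
      case True
      then obtain t0 where t0: "t0 \<ge> 1" "f1 (Ta t0) (Ts t0) \<le> 0" "f2 (Ta t0) (Ts t0) \<le> 0" by blast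
      have neg: "- f1 (Ta t) (Ts t) \<ge> 0 \<and> - f2 (Ta t) (Ts t) \<ge> 0" if "t \<ge> t0" for t
        using quad[OF t0(1) that] t0(2,3) by (intro sq_sum_zero) auto
      have "antimono_on {t0..} Ta"
        by (rule mono_from_deriv(2)[of t0 Ta "\<lambda>t. f1 (Ta t) (Ts t)"]) (use dTa t0 neg in auto)
      moreover have "antimono_on {t0..} Ts"
        by (rule mono_from_deriv(2)[of t0 Ts "\<lambda>t. f2 (Ta t) (Ts t)"]) (use dTs t0 neg in auto)
      ultimately show ?thesis using t0(1) by blast
    next
      case False2: False
      have nz1: "f1 (Ta t) (Ts t) \<noteq> 0" if "t \<ge> 1" for t
        using False1 False2 that by (metis linorder_le_cases order_refl)
      have nz2: "f2 (Ta t) (Ts t) \<noteq> 0" if "t \<ge> 1" for t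
        using False1 False2 that by (metis linorder_le_cases order_refl)
      have cTa: "continuous_on {1..} Ta" by (rule DERIV_continuous_on[of _ _ "\<lambda>t. f1 (Ta t) (Ts t)"]) (use dTa in \<open>auto intro: has_field_derivative_at_within\<close>)
      have cTs: "continuous_on {1..} Ts" by (rule DERIV_continuous_on[of _ _ "\<lambda>t. f2 (Ta t) (Ts t)"]) (use dTs in \<open>auto intro: has_field_derivative_at_within\<close>)
      have cba: "continuous_on {1..} (\<lambda>t. betaa (Ta t))"
        by (rule continuous_on_compose2[OF lipschitz_on_continuous_on[OF La] cTa]) auto
      have cbs: "continuous_on {1..} (\<lambda>t. betas (Ts t))"
        by (rule continuous_on_compose2[OF lipschitz_on_continuous_on[OF Ls] cTs]) auto
      have c1: "continuous_on {1..} (\<lambda>t. f1 (Ta t) (Ts t))"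
        unfolding f1_def Fa_def by (intro continuous_intros cTa cTs cba) (use gama in auto)
      have c2: "continuous_on {1..} (\<lambda>t. f2 (Ta t) (Ts t))"
        unfolding f2_def Fs_def by (intro continuous_intros cTa cTs cbs) (use gams in auto)
      have s1: "mono_on {1..} Ta \<or> antimono_on {1..} Ta"
        using sign_const[OF c1 nz1]
      proof
        assume "\<forall>t\<ge>1. f1 (Ta t) (Ts t) > 0"
        then show ?thesis by (intro disjI1 mono_from_deriv(1)[of 1 Ta "\<lambda>t. f1 (Ta t) (Ts t)"]) (auto intro: dTa less_imp_le)
      next
        assume "\<forall>t\<ge>1. f1 (Ta t) (Ts t) < 0"
        then show ?thesis by (intro disjI2 mono_from_deriv(2)[of 1 Ta "\<lambda>t. f1 (Ta t) (Ts t)"]) (auto intro: dTa less_imp_le)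
      qed
      have s2: "mono_on {1..} Ts \<or> antimono_on {1..} Ts"
        using sign_const[OF c2 nz2]
      proof
        assume "\<forall>t\<ge>1. f2 (Ta t) (Ts t) > 0"
        then show ?thesis by (intro disjI1 mono_from_deriv(1)[of 1 Ts "\<lambda>t. f2 (Ta t) (Ts t)"]) (auto intro: dTs less_imp_le)
      next
        assume "\<forall>t\<ge>1. f2 (Ta t) (Ts t) < 0"
        then show ?thesis by (intro disjI2 mono_from_deriv(2)[of 1 Ts "\<lambda>t. f2 (Ta t) (Ts t)"]) (auto intro: dTs less_imp_le)
      qed
      show ?thesis using s1 s2 by blast
    qed
  qed
  then obtain T where T: "T \<ge> 1" "mono_on {T..} Ta \<or> antimono_on {T..} Ta" "mono_on {T..} Ts \<or> antimono_on {T..} Ts"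
    by blast
  obtain a where a: "(Ta \<longlongrightarrow> a) at_top"
    using mono_bdd_conv[OF T(2), of M] bnd T(1) by auto
  obtain b where b: "(Ts \<longlongrightarrow> b) at_top"
    using mono_bdd_conv[OF T(3), of M] bnd T(1) by auto
  have iba: "isCont betaa a" using lipschitz_on_continuous_on[OF La] by (simp add: continuous_on_eq_continuous_at)
  have ibs: "isCont betas b" using lipschitz_on_continuous_on[OF Ls] by (simp add: continuous_on_eq_continuous_at)
  have la: "((\<lambda>t. betaa (Ta t)) \<longlongrightarrow> betaa a) at_top" by (rule isCont_tendsto_compose[OF iba a])
  have lb: "((\<lambda>t. betas (Ts t)) \<longlongrightarrow> betas b) at_top" by (rule isCont_tendsto_compose[OF ibs b])
  have l1: "((\<lambda>t. f1 (Ta t) (Ts t)) \<longlongrightarrow> f1 a b) at_top"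
    unfolding f1_def Fa_def by (intro tendsto_intros a b la) (use gama in auto)
  have l2: "((\<lambda>t. f2 (Ta t) (Ts t)) \<longlongrightarrow> f2 a b) at_top"
    unfolding f2_def Fs_def by (intro tendsto_intros a b lb) (use gams in auto)
  have z1: "f1 a b = 0"
    by (rule deriv_limit_zero[of T Ta "\<lambda>t. f1 (Ta t) (Ts t)" _ M]) (use dTa bnd T(1) l1 in auto)
  have z2: "f2 a b = 0"
    by (rule deriv_limit_zero[of T Ts "\<lambda>t. f2 (Ta t) (Ts t)" _ M]) (use dTs bnd T(1) l2 in auto)
  have eq: "is_equilibrium lam q sigB epsa betaa betas (a, b)"
    unfolding is_equilibrium_def using z1 z2 gama gams unfolding f1_def f2_def by simp
  have "((\<lambda>t. (Ta t, Ts t)) \<longlongrightarrow> (a, b)) at_top" by (rule tendsto_Pair[OF a b])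
  then show ?thesis using eq T by (intro conjI exI[of _ "(a, b)"] exI[of _ T]) auto
qed

end
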